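(* Let $q\ge 2$ be an integer and define $s_q(0)=0$ and $s_q(p)=s_q(p-1)+\lceil (s_q(p-1)+1)/(q-1)\rceil$ for positive integers $p$. Then $\operatorname{slog}(s_q(p),q)=p$ for all $p\ge0$, and for every integer $k\ge 0$, $\operatorname{slog}(k,q)$ equals the least $p\ge 0$ such that $k\le s_q(p)$.
   Context: The step logarithm is defined for positive integers $q$ and nonnegative integers $p$ by $\operatorname{slog}(0,q)=0$ and $\operatorname{slog}(p,q)=\operatorname{slog}(p-\lceil p/q\rceil,q)+1$ for $p\ge1$. *)

theory Defs
  imports Complex_Main
begin

function slog :: "nat \<Rightarrow> nat \<Rightarrow> nat" where
  "slog p q = (if p = 0 \<or> q = 0 then 0
               else slog (p - nat \<lceil>real p / real q\<rceil>) q + 1)"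
  by auto
termination
proof (relation "measure fst")
  fix p q :: nat
  assume "\<not> (p = 0 \<or> q = 0)"
  then have "real p / real q > 0" by simp
  then have "nat \<lceil>real p / real q\<rceil> > 0" by simp
  with \<open>\<not> (p = 0 \<or> q = 0)\<close> show "((p - nat \<lceil>real p / real q\<rceil>, q), p, q) \<in> measure fst"
    by simp
qed auto

declare slog.simps [simp del]

fun sq :: "nat \<Rightarrow> nat \<Rightarrow> nat" where
  "sq q 0 = 0"
| "sq q (Suc p) = sq q p + nat \<lceil>(real (sq q p) + 1) / (real q - 1)\<rceil>"

end

theory Submission
  imports Defs
begin

lemma key:
  fixes q k m :: nat
  assumes q: "q \<ge> 2"
  shows "(k - nat \<lceil>real k / real q\<rceil> \<le> m) \<longleftrightarrow>
         (k \<le> m + nat \<lceil>(real m + 1) / (real q - 1)\<rceil>)"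
proof -
  define c1 where "c1 = \<lceil>real k / real q\<rceil>"
  define c2 where "c2 = \<lceil>(real m + 1) / (real q - 1)\<rceil>"
  have qpos: "real q > 0" "real q - 1 > 0" using q by auto
  have c1p: "c1 \<ge> 0" 
  proof -
    have "0 \<le> real k / real q" by simp
    then have "(of_int 0::real) - 1 < real k / real q" by linarith
    then show ?thesis unfolding c1_def by (subst le_ceiling_iff)
  qed
  have c2p: "c2 \<ge> 0"
  proof -
    have "0 \<le> (real m + 1) / (real q - 1)" using qpos by simp
    then have "(of_int 0::real) - 1 < (real m + 1) / (real q - 1)" by linarith
    then show ?thesis unfolding c2_def by (subst le_ceiling_iff)
  qed
  have "(k - nat c1 \<le> m) \<longleftrightarrow> int k - int m \<le> c1" using c1p by linarith
  also have "\<dots> \<longleftrightarrow> real k - real m - 1 < real k / real q"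
    unfolding c1_def le_ceiling_iff by simp
  also have "\<dots> \<longleftrightarrow> (real k - real m - 1) * real q < real k"
    using qpos by (simp add: pos_less_divide_eq)
  also have "\<dots> \<longleftrightarrow> (real k - real m - 1) * (real q - 1) < real m + 1"
    by (simp add: algebra_simps)
  also have "\<dots> \<longleftrightarrow> real k - real m - 1 < (real m + 1) / (real q - 1)"
    using qpos by (simp add: pos_less_divide_eq)
  also have "\<dots> \<longleftrightarrow> int k - int m \<le> c2"
    unfolding c2_def le_ceiling_iff by simp
  also have "\<dots> \<longleftrightarrow> k \<le> m + nat c2" using c2p by linarith
  finally show ?thesis unfolding c1_def c2_def .
qed

lemma slog_le:
  assumes q: "q \<ge> 2"
  shows "slog k q \<le> p \<longleftrightarrow> k \<le> sq q p"
proof (induction p arbitrary: k)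
  case 0
  then show ?case using q by (subst slog.simps) auto
next
  case (Suc p)
  show ?case
  proof (cases "k = 0")
    case True
    then show ?thesis by (subst slog.simps) simp
  next
    case False
    then have "slog k q = slog (k - nat \<lceil>real k / real q\<rceil>) q + 1"
      using q by (subst slog.simps) simp
    then show ?thesis using Suc key[OF q] by simp
  qed
qed

lemma sq_mono: "q \<ge> 2 \<Longrightarrow> sq q p < sq q (Suc p)"
  by (simp add: add_pos_pos)

theorem mainTheorem9:
  fixes q :: nat
  assumes "q \<ge> 2"
  shows "(\<forall>p. slog (sq q p) q = p) \<and>
         (\<forall>k. slog k q = (LEAST p. k \<le> sq q p))"
proof -
  have L: "slog k q = (LEAST p. k \<le> sq q p)" for k
  proof (rule Least_equality[symmetric])
    show "k \<le> sq q (slog k q)" using slog_le[OF assms, of k "slog k q"] by simp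
  next
    fix y assume "k \<le> sq q y" then show "slog k q \<le> y" using slog_le[OF assms] by simp
  qed
  have "slog (sq q p) q = p" for p
  proof -
    have "slog (sq q p) q \<le> p" using slog_le[OF assms] by simp
    moreover have "\<not> slog (sq q p) q \<le> p - 1" if "p > 0"
    proof -
      have "sq q (p - 1) < sq q (Suc (p - 1))" using sq_mono[OF assms] .
      then show ?thesis using that slog_le[OF assms] by simp
    qed
    ultimately show ?thesis by (cases p) auto
  qed
  with L show ?thesis by blast
qed

end
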